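(* Let $u$ be a bounded nonnegative function on $\mathbb{N}$ and $\mathfrak{N}_u$ the 1D-GWN operator associated with $u$. Then $$\mathfrak{N}_u\Phi=\sum_{k=0}^\infty u(k)\,\mathfrak{a}_k^\dagger\mathfrak{a}_k\Phi,\qquad\Phi\in\mathcal{S}^*(M),$$ where the series converges in the strong topology of $\mathcal{S}^*(M)$.
   Context: Setting: $M$ a discrete-time normal martingale with the chaotic representation property; $Z_0=M_0$, $Z_n=M_n-M_{n-1}$; $\Gamma$ the finite subsets of $\mathbb{N}$, $Z_\emptyset=1$, $Z_\sigma=\prod_{j\in\sigma}Z_j$, an orthonormal basis of $\mathcal{L}^2(M)$. $\lambda_\emptyset=1$, $\lambda_\sigma=\prod_{k\in\sigma}(k+1)$; $\mathcal{S}(M)=\{\xi\in\mathcal{L}^2(M):\sum_\sigma\lambda_\sigma^{2p}|\langle Z_\sigma,\xi\rangle|^2<\infty\ \forall p\ge0\}$ (countably Hilbertian nuclear space), $\mathcal{S}^*(M)$ its dual with the strong topology. Fock transform $\widehat\Phi(\sigma)=\Phi(Z_\sigma)$ (determines $\Phi$); $\mathbf{1}_\sigma$ is the indicator of $\sigma$. The 1D-GWN operator $\mathfrak{N}_u$ is the unique continuous linear operator on $\mathcal{S}^*(M)$ with $\widehat{\mathfrak{N}_u\Phi}(\sigma)=\#_u(\sigma)\widehat\Phi(\sigma)$, $\#_u(\sigma)=\sum_k\mathbf{1}_\sigma(k)u(k)$. For $k\ge0$, $\mathfrak{a}_k,\mathfrak{a}_k^\dagger$ are the continuous linear operators on $\mathcal{S}^*(M)$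 determined by $\widehat{\mathfrak{a}_k\Phi}(\sigma)=(1-\mathbf{1}_\sigma(k))\widehat\Phi(\sigma\cup\{k\})$ and $\widehat{\mathfrak{a}_k^\dagger\Phi}(\sigma)=\mathbf{1}_\sigma(k)\widehat\Phi(\sigma\setminus\{k\})$. *)

theory Defs
  imports "HOL-Analysis.Analysis"
begin

text \<open>Concrete model of the Gel'fand triple S(M) \<subseteq> L^2(M) \<subseteq> S*(M) via the orthonormal
basis Z_sigma (sigma in Gamma): a test functional xi is represented by its coefficient
family sigma \<mapsto> <Z_sigma, xi>, indexed by finite subsets of nat.\<close>

definition Gam :: "nat set set" where
  "Gam = {\<sigma>. finite \<sigma>}"

definition lam :: "nat set \<Rightarrow> real" where
  "lam \<sigma> = (\<Prod>k\<in>\<sigma>. real (k + 1))"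

type_synonym coeff = "nat set \<Rightarrow> complex"
type_synonym gfun = "coeff \<Rightarrow> complex"

definition Stest :: "coeff set" where
  "Stest = {\<xi>. (\<forall>\<sigma>. \<sigma> \<notin> Gam \<longrightarrow> \<xi> \<sigma> = 0) \<and>
               (\<forall>p::nat. (\<lambda>\<sigma>. lam \<sigma> ^ (2 * p) * (cmod (\<xi> \<sigma>))\<^sup>2) summable_on Gam)}"

definition pnorm :: "nat \<Rightarrow> coeff \<Rightarrow> real" where
  "pnorm p \<xi> = sqrt (\<Sum>\<^sub>\<infinity>\<sigma>\<in>Gam. lam \<sigma> ^ (2 * p) * (cmod (\<xi> \<sigma>))\<^sup>2)"

definition Zb :: "nat set \<Rightarrow> coeff" where
  "Zb \<sigma> = (\<lambda>\<tau>. if \<tau> = \<sigma> then 1 else 0)"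

text \<open>Continuity of a linear functional on the countably Hilbertian space S(M) means
boundedness by one of the (increasing) norms ||.||_p.\<close>
definition Sstar :: "gfun set" where
  "Sstar = {\<Phi>. (\<forall>\<xi> \<eta>. \<xi> \<in> Stest \<longrightarrow> \<eta> \<in> Stest \<longrightarrow> \<Phi> (\<lambda>\<sigma>. \<xi> \<sigma> + \<eta> \<sigma>) = \<Phi> \<xi> + \<Phi> \<eta>) \<and>
              (\<forall>c \<xi>. \<xi> \<in> Stest \<longrightarrow> \<Phi> (\<lambda>\<sigma>. c * \<xi> \<sigma>) = c * \<Phi> \<xi>) \<and>
              (\<exists>p C. \<forall>\<xi>\<in>Stest. cmod (\<Phi> \<xi>) \<le> C * pnorm p \<xi>) \<and>
              (\<forall>\<xi>. \<xi> \<notin> Stest \<longrightarrow> \<Phi> \<xi> = 0)}"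

definition fock :: "gfun \<Rightarrow> nat set \<Rightarrow> complex" where
  "fock \<Phi> \<sigma> = \<Phi> (Zb \<sigma>)"

definition bounded_test :: "coeff set \<Rightarrow> bool" where
  "bounded_test B \<longleftrightarrow> B \<subseteq> Stest \<and> (\<forall>p. \<exists>C. \<forall>\<xi>\<in>B. pnorm p \<xi> \<le> C)"

definition strong_conv :: "(nat \<Rightarrow> gfun) \<Rightarrow> gfun \<Rightarrow> bool" where
  "strong_conv F \<Phi> \<longleftrightarrow> (\<forall>B. bounded_test B \<longrightarrow>
      (\<forall>\<epsilon>>0. \<forall>\<^sub>F n in sequentially. \<forall>\<xi>\<in>B. cmod (F n \<xi> - \<Phi> \<xi>) < \<epsilon>))"

definition cnt :: "(nat \<Rightarrow> real) \<Rightarrow> nat set \<Rightarrow> real" where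
  "cnt u \<sigma> = (\<Sum>k\<in>\<sigma>. u k)"

end

theory Submission
  imports Defs
begin


lemma Pow_Gam: "Pow {..<m} \<subseteq> Gam"
  by (auto simp: Gam_def intro: finite_subset)

lemma lam_ge1: "1 \<le> lam \<sigma>"
  unfolding lam_def by (intro prod_ge_1) auto

lemma fin_supp_Stest:
  assumes "finite S" "S \<subseteq> Gam" "\<And>\<sigma>. \<sigma> \<notin> S \<Longrightarrow> \<eta> \<sigma> = 0"
  shows "\<eta> \<in> Stest"
  unfolding Stest_def
proof (intro CollectI conjI allI impI)
  fix \<sigma> assume "\<sigma> \<notin> Gam" thus "\<eta> \<sigma> = 0" using assms by auto
next
  fix p :: nat
  let ?f = "\<lambda>\<sigma>. lam \<sigma> ^ (2 * p) * (cmod (\<eta> \<sigma>))\<^sup>2"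
  have "?f summable_on Gam \<longleftrightarrow> ?f summable_on S"
    by (rule summable_on_cong_neutral) (use assms in auto)
  thus "?f summable_on Gam" using assms(1) by simp
qed

lemma Zb_Stest: "\<sigma> \<in> Gam \<Longrightarrow> Zb \<sigma> \<in> Stest"
  by (rule fin_supp_Stest[of "{\<sigma>}"]) (auto simp: Zb_def)

lemma Stest_comp:
  assumes "\<xi> \<in> Stest" "\<And>\<sigma>. cmod (\<eta> \<sigma>) \<le> cmod (\<xi> \<sigma>)" "\<And>\<sigma>. \<sigma> \<notin> Gam \<Longrightarrow> \<eta> \<sigma> = 0"
  shows "\<eta> \<in> Stest"
  unfolding Stest_def
proof (intro CollectI conjI allI impI)
  fix \<sigma> assume "\<sigma> \<notin> Gam" thus "\<eta> \<sigma> = 0" using assms by auto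
next
  fix p :: nat
  have s: "(\<lambda>\<sigma>. lam \<sigma> ^ (2 * p) * (cmod (\<xi> \<sigma>))\<^sup>2) summable_on Gam"
    using assms(1) unfolding Stest_def by auto
  show "(\<lambda>\<sigma>. lam \<sigma> ^ (2 * p) * (cmod (\<eta> \<sigma>))\<^sup>2) summable_on Gam"
  proof (rule summable_on_comparison_test[OF s])
    fix \<sigma>
    have l: "0 \<le> lam \<sigma> ^ (2 * p)" using lam_ge1[of \<sigma>] by simp
    show "lam \<sigma> ^ (2 * p) * (cmod (\<eta> \<sigma>))\<^sup>2 \<le> lam \<sigma> ^ (2 * p) * (cmod (\<xi> \<sigma>))\<^sup>2"
      by (intro mult_left_mono l power_mono assms(2)) simp
    show "0 \<le> lam \<sigma> ^ (2 * p) * (cmod (\<eta> \<sigma>))\<^sup>2" using l by simp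
  qed
qed

lemma Sstar_zero:
  assumes "\<Psi> \<in> Sstar" shows "\<Psi> (\<lambda>\<tau>. 0) = 0"
proof -
  have z: "(\<lambda>\<tau>. 0::complex) \<in> Stest" by (rule fin_supp_Stest[of "{}"]) auto
  have "\<Psi> (\<lambda>\<sigma>. 0 * (\<lambda>\<tau>. 0) \<sigma>) = 0 * \<Psi> (\<lambda>\<tau>. 0)"
    using assms z unfolding Sstar_def by blast
  thus ?thesis by simp
qed

lemma Sstar_lin_sum:
  assumes "\<Psi> \<in> Sstar" "finite S" "S \<subseteq> Gam"
  shows "(\<lambda>\<tau>. \<Sum>\<sigma>\<in>S. c \<sigma> * Zb \<sigma> \<tau>) \<in> Stest \<and>
         \<Psi> (\<lambda>\<tau>. \<Sum>\<sigma>\<in>S. c \<sigma> * Zb \<sigma> \<tau>) = (\<Sum>\<sigma>\<in>S. c \<sigma> * fock \<Psi> \<sigma>)"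
  using assms(2,3)
proof (induction S rule: finite_induct)
  case empty
  then show ?case using Sstar_zero[OF assms(1)] by (auto intro: fin_supp_Stest[of "{}"])
next
  case (insert x S)
  have xG: "x \<in> Gam" using insert by auto
  have IH: "(\<lambda>\<tau>. \<Sum>\<sigma>\<in>S. c \<sigma> * Zb \<sigma> \<tau>) \<in> Stest"
     "\<Psi> (\<lambda>\<tau>. \<Sum>\<sigma>\<in>S. c \<sigma> * Zb \<sigma> \<tau>) = (\<Sum>\<sigma>\<in>S. c \<sigma> * fock \<Psi> \<sigma>)" using insert by auto
  have Zx: "Zb x \<in> Stest" using Zb_Stest[OF xG] .
  have lin1: "\<forall>\<xi> \<eta>. \<xi> \<in> Stest \<longrightarrow> \<eta> \<in> Stest \<longrightarrow> \<Psi> (\<lambda>\<sigma>. \<xi> \<sigma> + \<eta> \<sigma>) = \<Psi> \<xi> + \<Psi> \<eta>"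
    and lin2: "\<forall>c \<xi>. \<xi> \<in> Stest \<longrightarrow> \<Psi> (\<lambda>\<sigma>. c * \<xi> \<sigma>) = c * \<Psi> \<xi>"
    using assms(1) unfolding Sstar_def by blast+
  have cx: "(\<lambda>\<tau>. c x * Zb x \<tau>) \<in> Stest"
    by (rule fin_supp_Stest[of "{x}"]) (use xG in \<open>auto simp: Zb_def\<close>)
  have eq: "(\<lambda>\<tau>. \<Sum>\<sigma>\<in>insert x S. c \<sigma> * Zb \<sigma> \<tau>) = (\<lambda>\<tau>. c x * Zb x \<tau> + (\<Sum>\<sigma>\<in>S. c \<sigma> * Zb \<sigma> \<tau>))"
    using insert by simp
  have m: "(\<lambda>\<tau>. \<Sum>\<sigma>\<in>insert x S. c \<sigma> * Zb \<sigma> \<tau>) \<in> Stest"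
    by (rule fin_supp_Stest[of "insert x S"]) (use insert in \<open>auto simp: Zb_def if_distrib cong: if_cong\<close>)
  have "\<Psi> (\<lambda>\<tau>. \<Sum>\<sigma>\<in>insert x S. c \<sigma> * Zb \<sigma> \<tau>) = \<Psi> (\<lambda>\<tau>. c x * Zb x \<tau>) + \<Psi> (\<lambda>\<tau>. \<Sum>\<sigma>\<in>S. c \<sigma> * Zb \<sigma> \<tau>)"
    unfolding eq using lin1 cx IH(1) by blast
  also have "\<dots> = c x * fock \<Psi> x + (\<Sum>\<sigma>\<in>S. c \<sigma> * fock \<Psi> \<sigma>)"
    using lin2 Zx IH(2) by (simp add: fock_def)
  finally show ?case using m insert by simp
qed

lemma trunc_eq: "(\<lambda>\<tau>. \<Sum>\<sigma>\<in>Pow {..<m}. \<xi> \<sigma> * Zb \<sigma> \<tau>) = (\<lambda>\<tau>. if \<tau> \<in> Pow {..<m} then \<xi> \<tau> else 0)"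
  by (auto simp: Zb_def if_distrib cong: if_cong)



lemma Pow_filterlim: "filterlim (\<lambda>m. Pow {..<m}) (finite_subsets_at_top Gam) sequentially"
  unfolding filterlim_finite_subsets_at_top
proof (intro allI impI)
  fix X assume X: "finite X \<and> X \<subseteq> Gam"
  hence "finite (\<Union>X)" using X by (auto simp: Gam_def)
  then obtain M where M: "\<And>x. x \<in> \<Union>X \<Longrightarrow> x < M"
    using finite_nat_iff_bounded[of "\<Union>X"] by (auto simp: subset_eq)
  show "\<forall>\<^sub>F y in sequentially. finite (Pow {..<y}) \<and> X \<subseteq> Pow {..<y} \<and> Pow {..<y} \<subseteq> Gam"
    unfolding eventually_sequentially
  proof (intro exI[of _ M] allI impI conjI)
    fix m assume "M \<le> m"
    thus "X \<subseteq> Pow {..<m}" using M by fastforce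
  qed (auto simp: Pow_Gam)
qed

lemma tail_tendsto:
  assumes "\<xi> \<in> Stest"
  shows "(\<lambda>m. pnorm p (\<lambda>\<tau>. if \<tau> \<in> Pow {..<m} then 0 else \<xi> \<tau>)) \<longlonglongrightarrow> 0"
proof -
  define f where "f = (\<lambda>\<sigma>. lam \<sigma> ^ (2 * p) * (cmod (\<xi> \<sigma>))\<^sup>2)"
  have s: "f summable_on Gam" using assms unfolding Stest_def f_def by auto
  have hs: "(f has_sum infsum f Gam) Gam" using s by simp
  have lim: "(\<lambda>m. sum f (Pow {..<m})) \<longlonglongrightarrow> infsum f Gam"
    using hs unfolding has_sum_def
    by (rule filterlim_compose[OF _ Pow_filterlim])
  have eq: "pnorm p (\<lambda>\<tau>. if \<tau> \<in> Pow {..<m} then 0 else \<xi> \<tau>) = sqrt (infsum f Gam - sum f (Pow {..<m}))" for m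
  proof -
    have "(\<Sum>\<^sub>\<infinity>\<sigma>\<in>Gam. lam \<sigma> ^ (2 * p) * (cmod (if \<sigma> \<in> Pow {..<m} then 0 else \<xi> \<sigma>))\<^sup>2)
          = infsum f (Gam - Pow {..<m})"
      by (rule infsum_cong_neutral) (auto simp: f_def)
    also have "\<dots> = infsum f Gam - infsum f (Pow {..<m})"
      by (rule infsum_Diff[OF s]) (auto simp: Pow_Gam)
    finally show ?thesis unfolding pnorm_def by simp
  qed
  have "(\<lambda>m. sqrt (infsum f Gam - sum f (Pow {..<m}))) \<longlonglongrightarrow> sqrt (infsum f Gam - infsum f Gam)"
    by (intro tendsto_intros lim)
  thus ?thesis unfolding eq by simp
qed

lemma expansion:
  assumes "\<Psi> \<in> Sstar" "\<xi> \<in> Stest"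
  shows "(\<lambda>m. \<Sum>\<sigma>\<in>Pow {..<m}. \<xi> \<sigma> * fock \<Psi> \<sigma>) \<longlonglongrightarrow> \<Psi> \<xi>"
proof -
  obtain p C where C: "\<forall>\<xi>\<in>Stest. cmod (\<Psi> \<xi>) \<le> C * pnorm p \<xi>"
    using assms(1) unfolding Sstar_def by blast
  have lin1: "\<forall>\<xi> \<eta>. \<xi> \<in> Stest \<longrightarrow> \<eta> \<in> Stest \<longrightarrow> \<Psi> (\<lambda>\<sigma>. \<xi> \<sigma> + \<eta> \<sigma>) = \<Psi> \<xi> + \<Psi> \<eta>"
    using assms(1) unfolding Sstar_def by blast
  define r where "r m = (\<lambda>\<tau>. if \<tau> \<in> Pow {..<m} then 0 else \<xi> \<tau>)" for m
  define t where "t m = (\<lambda>\<tau>. if \<tau> \<in> Pow {..<m} then \<xi> \<tau> else 0)" for m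
  have rS: "r m \<in> Stest" for m
    by (rule Stest_comp[OF assms(2)]) (use assms(2) in \<open>auto simp: r_def Stest_def\<close>)
  have tS: "t m \<in> Stest" and tP: "\<Psi> (t m) = (\<Sum>\<sigma>\<in>Pow {..<m}. \<xi> \<sigma> * fock \<Psi> \<sigma>)" for m
    using Sstar_lin_sum[OF assms(1), of "Pow {..<m}" \<xi>] Pow_Gam[of m]
    unfolding trunc_eq t_def by auto
  have xi_eq: "\<xi> = (\<lambda>\<sigma>. t m \<sigma> + r m \<sigma>)" for m
    by (auto simp: t_def r_def)
  have split: "\<Psi> \<xi> - (\<Sum>\<sigma>\<in>Pow {..<m}. \<xi> \<sigma> * fock \<Psi> \<sigma>) = \<Psi> (r m)" for m
  proof -
    have "\<Psi> \<xi> = \<Psi> (t m) + \<Psi> (r m)"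
      using lin1 tS rS xi_eq by metis
    thus ?thesis using tP by simp
  qed
  have "(\<lambda>m. \<Psi> \<xi> - (\<Sum>\<sigma>\<in>Pow {..<m}. \<xi> \<sigma> * fock \<Psi> \<sigma>)) \<longlonglongrightarrow> 0"
    unfolding split
  proof (rule Lim_null_comparison)
    show "\<forall>\<^sub>F m in sequentially. norm (\<Psi> (r m)) \<le> C * pnorm p (r m)"
      using C rS by auto
    show "(\<lambda>m. C * pnorm p (r m)) \<longlonglongrightarrow> 0"
      using tail_tendsto[OF assms(2), of p] unfolding r_def
      by (intro tendsto_mult_right_zero)
  qed
  hence "(\<lambda>m. \<Psi> \<xi> - (\<Psi> \<xi> - (\<Sum>\<sigma>\<in>Pow {..<m}. \<xi> \<sigma> * fock \<Psi> \<sigma>))) \<longlonglongrightarrow> \<Psi> \<xi> - 0"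
    by (intro tendsto_intros)
  thus ?thesis by simp
qed



lemma card_lam_aux:
  "finite \<sigma> \<Longrightarrow> real (card \<sigma>) \<le> lam \<sigma> \<and> (0 \<notin> \<sigma> \<longrightarrow> real (card \<sigma>) + 1 \<le> lam \<sigma>)"
proof (induction \<sigma> rule: finite_induct)
  case empty then show ?case by (simp add: lam_def)
next
  case (insert x S)
  have l: "lam (insert x S) = real (x + 1) * lam S" using insert by (simp add: lam_def)
  have l1: "1 \<le> lam S" by (rule lam_ge1)
  show ?case
  proof (cases "x = 0")
    case True
    then show ?thesis using insert l by simp
  next
    case False
    hence x1: "2 \<le> real (x + 1)" by simp
    have "2 * lam S \<le> real (x + 1) * lam S" using x1 l1 by (intro mult_right_mono) auto
    hence h2: "2 * lam S \<le> lam (insert x S)" using l by simp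
    have c: "card (insert x S) = card S + 1" using insert by simp
    show ?thesis using insert(3) h2 l1 unfolding c by auto
  qed
qed

lemma card_le_lam: "finite \<sigma> \<Longrightarrow> real (card \<sigma>) \<le> lam \<sigma>"
  using card_lam_aux by blast

lemma elem_le_lam:
  assumes "finite \<sigma>" "k \<in> \<sigma>" shows "real (k + 1) \<le> lam \<sigma>"
proof -
  have "lam \<sigma> = real (k + 1) * lam (\<sigma> - {k})"
    using assms unfolding lam_def by (simp add: prod.remove)
  moreover have "1 \<le> lam (\<sigma> - {k})" by (rule lam_ge1)
  ultimately show ?thesis by (simp add: mult_le_cancel_left1)
qed

lemma sum_inv_sq: "(\<Sum>k<m. 1 / real (k + 1) ^ 2) \<le> 2 - 2 / real (m + 1)"
proof (induction m)
  case 0 then show ?case by simp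
next
  case (Suc m)
  have "1 / real (m + 1) ^ 2 \<le> 2 / real (m + 1) - 2 / real (Suc m + 1)"
    proof -
      define a where "a = real m + 1"
      have a: "1 \<le> a" by (simp add: a_def)
      have aa: "a \<le> a * a" using a by (simp add: mult_le_cancel_left1)
      have e: "2 / a - 2 / (a + 1) = 2 / (a * (a + 1))" using a by (simp add: field_simps)
      have "1 / a ^ 2 \<le> 2 / (a * (a + 1))"
        using a aa by (simp add: divide_simps power2_eq_square)
      hence "1 / a ^ 2 \<le> 2 / a - 2 / (a + 1)" using e by simp
      thus ?thesis by (simp add: a_def add.commute)
    qed
  then show ?case using Suc by simp
qed

lemma sum_lam_inv: "(\<Sum>\<sigma>\<in>Pow {..<m}. 1 / lam \<sigma> ^ 2) \<le> exp 2"
proof -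
  have e: "1 / lam \<sigma> ^ 2 = (\<Prod>k\<in>\<sigma>. 1 / real (k + 1) ^ 2)" for \<sigma>
    by (simp add: lam_def prod_power_distrib prod_dividef)
  have "(\<Sum>\<sigma>\<in>Pow {..<m}. 1 / lam \<sigma> ^ 2) = (\<Sum>X\<in>Pow {..<m}. (\<Prod>k\<in>X. 1 / real (k + 1) ^ 2) * (\<Prod>k\<in>{..<m}-X. 1))"
    unfolding e by simp
  also have "\<dots> = (\<Prod>k<m. 1 / real (k + 1) ^ 2 + 1)"
    by (rule prod_add[symmetric]) simp
  also have "\<dots> \<le> (\<Prod>k<m. exp (1 / real (k + 1) ^ 2))"
    by (intro prod_mono) (auto simp: add.commute[of _ 1] exp_ge_add_one_self)
  also have "\<dots> = exp (\<Sum>k<m. 1 / real (k + 1) ^ 2)" by (simp add: exp_sum)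
  also have "\<dots> \<le> exp 2"
  proof -
    have "0 \<le> 2 / real (m + 1)" by simp
    hence "(\<Sum>k<m. 1 / real (k + 1) ^ 2) \<le> 2" using sum_inv_sq[of m] by linarith
    thus ?thesis by simp
  qed
  finally show ?thesis .
qed

lemma partial_le_pnorm:
  assumes "\<xi> \<in> Stest"
  shows "(\<Sum>\<sigma>\<in>Pow {..<m}. lam \<sigma> ^ (2 * q) * (cmod (\<xi> \<sigma>))\<^sup>2) \<le> (pnorm q \<xi>)\<^sup>2"
proof -
  define f where "f = (\<lambda>\<sigma>. lam \<sigma> ^ (2 * q) * (cmod (\<xi> \<sigma>))\<^sup>2)"
  have s: "f summable_on Gam" using assms unfolding Stest_def f_def by auto
  have nn: "0 \<le> f \<sigma>" for \<sigma> using lam_ge1[of \<sigma>] by (simp add: f_def)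
  have "sum f (Pow {..<m}) = infsum f (Pow {..<m})" by simp
  also have "\<dots> \<le> infsum f Gam"
    by (rule infsum_mono_neutral) (use s nn Pow_Gam[of m] in auto)
  also have "\<dots> = (pnorm q \<xi>)\<^sup>2"
    unfolding pnorm_def f_def[symmetric] using infsum_nonneg[of Gam f] nn by simp
  finally show ?thesis unfolding f_def .
qed

lemma pnorm_Zb: "\<sigma> \<in> Gam \<Longrightarrow> pnorm p (Zb \<sigma>) = lam \<sigma> ^ p"
proof -
  assume G: "\<sigma> \<in> Gam"
  have "(\<Sum>\<^sub>\<infinity>\<tau>\<in>Gam. lam \<tau> ^ (2 * p) * (cmod (Zb \<sigma> \<tau>))\<^sup>2) = (\<Sum>\<^sub>\<infinity>\<tau>\<in>{\<sigma>}. lam \<tau> ^ (2 * p) * (cmod (Zb \<sigma> \<tau>))\<^sup>2)"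
    by (rule infsum_cong_neutral) (use G in \<open>auto simp: Zb_def\<close>)
  also have "\<dots> = lam \<sigma> ^ (2 * p)" by (simp add: Zb_def)
  also have "\<dots> = (lam \<sigma> ^ p)\<^sup>2" by (simp add: power_mult[symmetric] mult.commute)
  finally have e: "(\<Sum>\<^sub>\<infinity>\<tau>\<in>Gam. lam \<tau> ^ (2 * p) * (cmod (Zb \<sigma> \<tau>))\<^sup>2) = (lam \<sigma> ^ p)\<^sup>2" .
  have "0 \<le> lam \<sigma> ^ p" using lam_ge1[of \<sigma>] by simp
  thus ?thesis unfolding pnorm_def e by simp
qed

lemma main_est:
  assumes "\<xi> \<in> Stest" "0 \<le> A" "\<And>\<sigma>. \<sigma> \<in> Gam \<Longrightarrow> cmod (c \<sigma>) \<le> A * lam \<sigma> ^ (q + 2)"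
  shows "cmod (\<Sum>\<sigma>\<in>Pow {..<m}. \<xi> \<sigma> * c \<sigma>) \<le> A * ((pnorm (q + 3) \<xi>)\<^sup>2 + exp 2) / 2"
proof -
  have "cmod (\<Sum>\<sigma>\<in>Pow {..<m}. \<xi> \<sigma> * c \<sigma>) \<le> (\<Sum>\<sigma>\<in>Pow {..<m}. cmod (\<xi> \<sigma>) * cmod (c \<sigma>))"
    by (rule order_trans[OF norm_sum]) (simp add: norm_mult)
  also have "\<dots> \<le> (\<Sum>\<sigma>\<in>Pow {..<m}. A * ((lam \<sigma> ^ (2 * (q + 3)) * (cmod (\<xi> \<sigma>))\<^sup>2 + 1 / lam \<sigma> ^ 2) / 2))"
  proof (rule sum_mono)
    fix \<sigma> assume "\<sigma> \<in> Pow {..<m}"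
    hence G: "\<sigma> \<in> Gam" using Pow_Gam by auto
    define L where "L = lam \<sigma>"
    have L1: "1 \<le> L" using lam_ge1 L_def by simp
    define x where "x = cmod (\<xi> \<sigma>)"
    have x0: "0 \<le> x" by (simp add: x_def)
    have "cmod (\<xi> \<sigma>) * cmod (c \<sigma>) \<le> x * (A * L ^ (q + 2))"
      using assms(3)[OF G] x0 by (simp add: x_def L_def mult_left_mono)
    also have "\<dots> = A * ((x * L ^ (q + 3)) * (1 / L))"
    proof -
      have e3: "q + 3 = Suc (q + 2)" by simp
      have "L ^ (q + 3) = L ^ (q + 2) * L" by (simp only: e3 power_Suc2)
      thus ?thesis using L1 by (simp add: field_simps)
    qed
    also have "\<dots> \<le> A * (((x * L ^ (q + 3))\<^sup>2 + (1 / L)\<^sup>2) / 2)"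
    proof (intro mult_left_mono assms(2))
      have "0 \<le> (x * L ^ (q + 3) - 1 / L)\<^sup>2" by simp
      thus "x * L ^ (q + 3) * (1 / L) \<le> ((x * L ^ (q + 3))\<^sup>2 + (1 / L)\<^sup>2) / 2"
        by (simp add: power2_diff mult.commute)
    qed
    also have "\<dots> = A * ((L ^ (2 * (q + 3)) * x\<^sup>2 + 1 / L ^ 2) / 2)"
    proof -
      have "(x * L ^ (q + 3))\<^sup>2 = L ^ (2 * (q + 3)) * x\<^sup>2"
        by (simp add: power_mult_distrib power_mult[symmetric] mult.commute)
      moreover have "(1 / L)\<^sup>2 = 1 / L ^ 2" by (simp add: power_one_over)
      ultimately show ?thesis by simp
    qed
    finally show "cmod (\<xi> \<sigma>) * cmod (c \<sigma>) \<le> A * ((lam \<sigma> ^ (2 * (q + 3)) * (cmod (\<xi> \<sigma>))\<^sup>2 + 1 / lam \<sigma> ^ 2) / 2)"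
      by (simp add: L_def x_def)
  qed
  also have "\<dots> = A * ((\<Sum>\<sigma>\<in>Pow {..<m}. lam \<sigma> ^ (2 * (q + 3)) * (cmod (\<xi> \<sigma>))\<^sup>2) + (\<Sum>\<sigma>\<in>Pow {..<m}. 1 / lam \<sigma> ^ 2)) / 2"
  proof -
    define a where "a \<sigma> = lam \<sigma> ^ (2 * (q + 3)) * (cmod (\<xi> \<sigma>))\<^sup>2" for \<sigma>
    define b where "b \<sigma> = 1 / lam \<sigma> ^ 2" for \<sigma>
    have "(\<Sum>\<sigma>\<in>Pow {..<m}. A * ((a \<sigma> + b \<sigma>) / 2)) = (\<Sum>\<sigma>\<in>Pow {..<m}. (A * a \<sigma> + A * b \<sigma>) / 2)"
      by (simp add: ring_distribs)
    also have "\<dots> = ((\<Sum>\<sigma>\<in>Pow {..<m}. A * a \<sigma>) + (\<Sum>\<sigma>\<in>Pow {..<m}. A * b \<sigma>)) / 2"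
      by (simp only: sum_divide_distrib[symmetric] sum.distrib)
    also have "\<dots> = A * ((\<Sum>\<sigma>\<in>Pow {..<m}. a \<sigma>) + (\<Sum>\<sigma>\<in>Pow {..<m}. b \<sigma>)) / 2"
      by (simp only: sum_distrib_left ring_distribs)
    finally show ?thesis unfolding a_def b_def .
  qed
  also have "\<dots> \<le> A * ((pnorm (q + 3) \<xi>)\<^sup>2 + exp 2) / 2"
    using partial_le_pnorm[OF assms(1), where m=m and q="q + 3"] sum_lam_inv[of m] assms(2)
    by (intro divide_right_mono mult_left_mono add_mono) auto
  finally show ?thesis .
qed



lemma coef_eq:
  assumes "finite \<sigma>"
  shows "(\<Sum>k<n. complex_of_real (u k) * (if k \<in> \<sigma> then f else 0)) - complex_of_real (cnt u \<sigma>) * f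
         = - complex_of_real (\<Sum>k\<in>\<sigma> - {..<n}. u k) * f"
proof -
  have "(\<Sum>k<n. complex_of_real (u k) * (if k \<in> \<sigma> then f else 0)) = (\<Sum>k<n. (if k \<in> \<sigma> then complex_of_real (u k) else 0)) * f"
    by (auto simp: sum_distrib_right intro!: sum.cong)
  also have "(\<Sum>k<n. (if k \<in> \<sigma> then complex_of_real (u k) else 0)) = complex_of_real (\<Sum>k\<in>\<sigma> \<inter> {..<n}. u k)"
    by (simp add: sum.inter_restrict[symmetric] Int_commute)
  finally have 1: "(\<Sum>k<n. complex_of_real (u k) * (if k \<in> \<sigma> then f else 0)) = complex_of_real (\<Sum>k\<in>\<sigma> \<inter> {..<n}. u k) * f" .
  have 2: "cnt u \<sigma> = (\<Sum>k\<in>\<sigma> \<inter> {..<n}. u k) + (\<Sum>k\<in>\<sigma> - {..<n}. u k)"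
    unfolding cnt_def using assms by (rule sum.Int_Diff)
  show ?thesis unfolding 1 2 by (simp add: ring_distribs)
qed

theorem theorem3p9:
  fixes u :: "nat \<Rightarrow> real"
    and N :: "gfun \<Rightarrow> gfun"
    and a adag :: "nat \<Rightarrow> gfun \<Rightarrow> gfun"
  assumes u_nonneg: "\<forall>k. u k \<ge> 0"
    and u_bdd: "\<exists>C. \<forall>k. u k \<le> C"
    and N_maps: "\<forall>\<Phi>\<in>Sstar. N \<Phi> \<in> Sstar"
    and N_fock: "\<forall>\<Phi>\<in>Sstar. \<forall>\<sigma>\<in>Gam. fock (N \<Phi>) \<sigma> = complex_of_real (cnt u \<sigma>) * fock \<Phi> \<sigma>"
    and a_maps: "\<forall>k. \<forall>\<Phi>\<in>Sstar. a k \<Phi> \<in> Sstar"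
    and a_fock: "\<forall>k. \<forall>\<Phi>\<in>Sstar. \<forall>\<sigma>\<in>Gam.
                   fock (a k \<Phi>) \<sigma> = (if k \<in> \<sigma> then 0 else fock \<Phi> (insert k \<sigma>))"
    and adag_maps: "\<forall>k. \<forall>\<Phi>\<in>Sstar. adag k \<Phi> \<in> Sstar"
    and adag_fock: "\<forall>k. \<forall>\<Phi>\<in>Sstar. \<forall>\<sigma>\<in>Gam.
                   fock (adag k \<Phi>) \<sigma> = (if k \<in> \<sigma> then fock \<Phi> (\<sigma> - {k}) else 0)"
    and Phi: "\<Phi> \<in> Sstar"
  shows "strong_conv (\<lambda>n. \<lambda>\<xi>. \<Sum>k<n. complex_of_real (u k) * adag k (a k \<Phi>) \<xi>) (N \<Phi>)"
proof -
  obtain U where U: "\<And>k. u k \<le> U" using u_bdd by blast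
  have U0: "0 \<le> U" using U[of 0] u_nonneg by (meson order_trans)
  obtain p0 C0 where C0: "\<forall>\<xi>\<in>Stest. cmod (\<Phi> \<xi>) \<le> C0 * pnorm p0 \<xi>"
    using Phi unfolding Sstar_def by blast
  have fbound: "cmod (fock \<Phi> \<sigma>) \<le> C0 * lam \<sigma> ^ p0" if "\<sigma> \<in> Gam" for \<sigma>
    using C0 Zb_Stest[OF that] pnorm_Zb[OF that, of p0] unfolding fock_def by auto
  have C00: "0 \<le> C0"
  proof -
    have "{} \<in> Gam" by (simp add: Gam_def)
    from fbound[OF this] show ?thesis by (simp add: lam_def) (meson norm_ge_zero order_trans)
  qed
  define Psi where "Psi k = adag k (a k \<Phi>)" for k
  have PsiS: "Psi k \<in> Sstar" for k using a_maps adag_maps Phi by (simp add: Psi_def)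
  have NS: "N \<Phi> \<in> Sstar" using N_maps Phi by blast
  have fPsi: "fock (Psi k) \<sigma> = (if k \<in> \<sigma> then fock \<Phi> \<sigma> else 0)" if G: "\<sigma> \<in> Gam" for k \<sigma>
  proof (cases "k \<in> \<sigma>")
    case True
    have G': "\<sigma> - {k} \<in> Gam" using G by (auto simp: Gam_def)
    have "fock (Psi k) \<sigma> = fock (a k \<Phi>) (\<sigma> - {k})"
      using adag_fock a_maps Phi G True by (simp add: Psi_def)
    also have "\<dots> = fock \<Phi> (insert k (\<sigma> - {k}))" using a_fock Phi G' by simp
    finally show ?thesis using True by (simp add: insert_absorb)
  next
    case False then show ?thesis using adag_fock a_maps Phi G by (simp add: Psi_def)
  qed
  define c where "c n \<sigma> = - complex_of_real (\<Sum>k\<in>\<sigma> - {..<n}. u k) * fock \<Phi> \<sigma>" for n \<sigma>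
  define G where "G n \<xi> = (\<Sum>k<n. complex_of_real (u k) * Psi k \<xi>) - N \<Phi> \<xi>" for n \<xi>
  have conv: "(\<lambda>m. \<Sum>\<sigma>\<in>Pow {..<m}. \<xi> \<sigma> * c n \<sigma>) \<longlonglongrightarrow> G n \<xi>" if xS: "\<xi> \<in> Stest" for n \<xi>
  proof -
    have "(\<lambda>m. (\<Sum>k<n. complex_of_real (u k) * (\<Sum>\<sigma>\<in>Pow {..<m}. \<xi> \<sigma> * fock (Psi k) \<sigma>))
              - (\<Sum>\<sigma>\<in>Pow {..<m}. \<xi> \<sigma> * fock (N \<Phi>) \<sigma>)) \<longlonglongrightarrow> G n \<xi>"
      unfolding G_def
      by (intro tendsto_diff tendsto_sum tendsto_mult tendsto_const expansion PsiS NS xS)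
    moreover have "(\<Sum>k<n. complex_of_real (u k) * (\<Sum>\<sigma>\<in>Pow {..<m}. \<xi> \<sigma> * fock (Psi k) \<sigma>))
              - (\<Sum>\<sigma>\<in>Pow {..<m}. \<xi> \<sigma> * fock (N \<Phi>) \<sigma>) = (\<Sum>\<sigma>\<in>Pow {..<m}. \<xi> \<sigma> * c n \<sigma>)" for m
    proof -
      have "(\<Sum>k<n. complex_of_real (u k) * (\<Sum>\<sigma>\<in>Pow {..<m}. \<xi> \<sigma> * fock (Psi k) \<sigma>))
            = (\<Sum>\<sigma>\<in>Pow {..<m}. \<xi> \<sigma> * (\<Sum>k<n. complex_of_real (u k) * fock (Psi k) \<sigma>))"
        by (simp add: sum_distrib_left sum_distrib_right mult.left_commute sum.swap[of _ "{..<n}"])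
      hence "(\<Sum>k<n. complex_of_real (u k) * (\<Sum>\<sigma>\<in>Pow {..<m}. \<xi> \<sigma> * fock (Psi k) \<sigma>))
              - (\<Sum>\<sigma>\<in>Pow {..<m}. \<xi> \<sigma> * fock (N \<Phi>) \<sigma>)
            = (\<Sum>\<sigma>\<in>Pow {..<m}. \<xi> \<sigma> * ((\<Sum>k<n. complex_of_real (u k) * fock (Psi k) \<sigma>) - fock (N \<Phi>) \<sigma>))"
        by (simp add: sum_subtractf right_diff_distrib)
      also have "\<dots> = (\<Sum>\<sigma>\<in>Pow {..<m}. \<xi> \<sigma> * c n \<sigma>)"
      proof (rule sum.cong[OF refl])
        fix \<sigma> assume "\<sigma> \<in> Pow {..<m}"
        hence G: "\<sigma> \<in> Gam" using Pow_Gam by blast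
        hence fin: "finite \<sigma>" by (simp add: Gam_def)
        have "(\<Sum>k<n. complex_of_real (u k) * fock (Psi k) \<sigma>) - fock (N \<Phi>) \<sigma>
            = (\<Sum>k<n. complex_of_real (u k) * (if k \<in> \<sigma> then fock \<Phi> \<sigma> else 0)) - complex_of_real (cnt u \<sigma>) * fock \<Phi> \<sigma>"
          using fPsi[OF G] N_fock Phi G by simp
        also have "\<dots> = c n \<sigma>" unfolding c_def by (rule coef_eq[OF fin])
        finally show "\<xi> \<sigma> * ((\<Sum>k<n. complex_of_real (u k) * fock (Psi k) \<sigma>) - fock (N \<Phi>) \<sigma>) = \<xi> \<sigma> * c n \<sigma>"
          by simp
      qed
      finally show ?thesis .
    qed
    ultimately show ?thesis by simp
  qed
  have cbound: "cmod (c n \<sigma>) \<le> (U * C0 / real (n + 1)) * lam \<sigma> ^ (p0 + 2)" if G: "\<sigma> \<in> Gam" for n \<sigma>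
  proof -
    have fin: "finite \<sigma>" using G by (simp add: Gam_def)
    define d where "d = (\<Sum>k\<in>\<sigma> - {..<n}. u k)"
    have d0: "0 \<le> d" unfolding d_def using u_nonneg by (simp add: sum_nonneg)
    define L where "L = lam \<sigma>"
    have L1: "1 \<le> L" using lam_ge1 by (simp add: L_def)
    have dL: "d \<le> U * L * L / real (n + 1)"
    proof (cases "\<sigma> - {..<n} = {}")
      case True
      hence "d = 0" unfolding d_def by (metis sum.empty)
      thus ?thesis using U0 L1 by simp
    next
      case False
      then obtain k where k: "k \<in> \<sigma>" "n \<le> k" by (meson Diff_eq_empty_iff lessThan_iff not_le subsetI)
      have Ln: "real (n + 1) \<le> L" using elem_le_lam[OF fin k(1)] k(2) by (simp add: L_def)
      have "d \<le> of_nat (card (\<sigma> - {..<n})) * U" unfolding d_def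
        by (rule sum_bounded_above) (simp add: U)
      also have "\<dots> \<le> real (card \<sigma>) * U"
        using fin U0 by (intro mult_right_mono) (auto intro: card_mono)
      also have "\<dots> \<le> L * U" using card_le_lam[OF fin] U0 by (simp add: L_def mult_right_mono)
      also have "\<dots> \<le> U * L * L / real (n + 1)"
      proof -
        have "L * U * real (n + 1) \<le> L * U * L"
          using Ln L1 U0 by (intro mult_left_mono) auto
        thus ?thesis by (simp add: field_simps)
      qed
      finally show ?thesis .
    qed
    have "cmod (c n \<sigma>) = d * cmod (fock \<Phi> \<sigma>)"
      unfolding c_def d_def[symmetric] using d0 by (simp add: norm_mult)
    also have "\<dots> \<le> (U * L * L / real (n + 1)) * (C0 * L ^ p0)"
      using dL fbound[OF G] d0 by (intro mult_mono) (auto simp: L_def)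
    also have "\<dots> = (U * C0 / real (n + 1)) * L ^ (p0 + 2)"
      by (simp add: power_add power2_eq_square field_simps)
    finally show ?thesis by (simp add: L_def)
  qed
  show ?thesis
    unfolding strong_conv_def
  proof (intro allI impI)
    fix B \<epsilon> assume B: "bounded_test B" and e: "(0::real) < \<epsilon>"
    have BS: "B \<subseteq> Stest" using B by (simp add: bounded_test_def)
    obtain D where D: "\<And>\<xi>. \<xi> \<in> B \<Longrightarrow> pnorm (p0 + 3) \<xi> \<le> D"
      using B unfolding bounded_test_def by blast
    define K where "K = U * C0 * (D\<^sup>2 + exp 2) / 2"
    have K0: "0 \<le> K" unfolding K_def using U0 C00 by simp
    obtain n0 :: nat where n0: "K / \<epsilon> < real n0" using reals_Archimedean2 by blast
    have bnd: "cmod (G n \<xi>) \<le> K / real (n + 1)" if xB: "\<xi> \<in> B" for n \<xi>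
    proof -
      have xS: "\<xi> \<in> Stest" using xB BS by blast
      have A0: "0 \<le> U * C0 / real (n + 1)" using U0 C00 by simp
      have pn0: "0 \<le> pnorm (p0 + 3) \<xi>" unfolding pnorm_def by (intro real_sqrt_ge_zero infsum_nonneg mult_nonneg_nonneg zero_le_power) (auto intro: order_trans[OF zero_le_one lam_ge1])
      have pD: "(pnorm (p0 + 3) \<xi>)\<^sup>2 \<le> D\<^sup>2" using D[OF xB] pn0 by (intro power_mono) auto
      have "cmod (\<Sum>\<sigma>\<in>Pow {..<m}. \<xi> \<sigma> * c n \<sigma>) \<le> K / real (n + 1)" for m
      proof -
        have "cmod (\<Sum>\<sigma>\<in>Pow {..<m}. \<xi> \<sigma> * c n \<sigma>) \<le> (U * C0 / real (n + 1)) * ((pnorm (p0 + 3) \<xi>)\<^sup>2 + exp 2) / 2"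
          by (rule main_est[OF xS A0 cbound])
        also have "\<dots> \<le> (U * C0 / real (n + 1)) * (D\<^sup>2 + exp 2) / 2"
          using pD A0 by (intro divide_right_mono mult_left_mono) auto
        also have "\<dots> = K / real (n + 1)" by (simp add: K_def)
        finally show ?thesis .
      qed
      moreover have "(\<lambda>m. cmod (\<Sum>\<sigma>\<in>Pow {..<m}. \<xi> \<sigma> * c n \<sigma>)) \<longlonglongrightarrow> cmod (G n \<xi>)"
        by (intro tendsto_norm conv xS)
      ultimately show ?thesis by (intro LIMSEQ_le_const2) auto
    qed
    show "\<forall>\<^sub>F n in sequentially. \<forall>\<xi>\<in>B. cmod ((\<Sum>k<n. complex_of_real (u k) * adag k (a k \<Phi>) \<xi>) - N \<Phi> \<xi>) < \<epsilon>"
      unfolding eventually_sequentially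
    proof (intro exI[of _ n0] allI impI ballI)
      fix n \<xi> assume n: "n0 \<le> n" and xB: "\<xi> \<in> B"
      have "K < \<epsilon> * real n0" using n0 e by (simp add: field_simps)
      also have "\<dots> \<le> \<epsilon> * real (n + 1)" using n e by simp
      finally have "K / real (n + 1) < \<epsilon>" by (simp add: field_simps)
      thus "cmod ((\<Sum>k<n. complex_of_real (u k) * adag k (a k \<Phi>) \<xi>) - N \<Phi> \<xi>) < \<epsilon>"
        using bnd[OF xB, of n] by (simp add: G_def Psi_def)
    qed
  qed
qed


end
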